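(* Let $\mathbb F$ be a field and let $D$ be an $m\times m$ differential matrix over $\mathbb F$. Then there exist an almost-Jordan differential matrix $\underline D$ and a triangular matrix $B$ (both $m\times m$ over $\mathbb F$) such that $D = B\,\underline D\,B^{-1}$.
   Context: A differential matrix is a square matrix $D$ with $D^2=0$. A differential matrix is Jordan if it is block-diagonal with every diagonal block equal to either the $1\times 1$ zero matrix $J=[0]$ or the $2\times 2$ matrix $K=\begin{bmatrix}0&1\\0&0\end{bmatrix}$. A differential matrix $\underline D$ is almost-Jordan if there is a permutation matrix $P$ such that $P^{-1}\underline D P$ is Jordan. A square matrix is called triangular if it is upper-triangular and invertible. *)

theory Defs
  imports "Jordan_Normal_Form.Jordan_Normal_Form" "HOL-Combinatorics.Permutations"
begin

definition differential_mat :: "'a::field mat \<Rightarrow> bool" where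
  "differential_mat D \<longleftrightarrow> square_mat D \<and> D * D = 0\<^sub>m (dim_row D) (dim_col D)"

(* Jordan differential matrix: block diagonal with blocks J = [0] (jordan_block 1 0)
   or K = [[0,1],[0,0]] (jordan_block 2 0). *)
definition jordan_differential_mat :: "'a::field mat \<Rightarrow> bool" where
  "jordan_differential_mat D \<longleftrightarrow>
     (\<exists>bs. set bs \<subseteq> {1, 2} \<and> D = jordan_matrix (map (\<lambda>b. (b, 0)) bs))"

definition permutation_mat :: "nat \<Rightarrow> 'a::field mat \<Rightarrow> bool" where
  "permutation_mat n P \<longleftrightarrow>
     (\<exists>p. p permutes {..<n} \<and> P = mat n n (\<lambda>(i, j). if i = p j then 1 else 0))"

definition almost_jordan_mat :: "'a::field mat \<Rightarrow> bool" where
  "almost_jordan_mat D \<longleftrightarrow> differential_mat D \<and>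
     (\<exists>P Pinv. permutation_mat (dim_row D) P \<and> Pinv \<in> carrier_mat (dim_row D) (dim_row D) \<and>
        P * Pinv = 1\<^sub>m (dim_row D) \<and> Pinv * P = 1\<^sub>m (dim_row D) \<and>
        jordan_differential_mat (Pinv * D * P))"

(* "triangular" in the paper: upper triangular and invertible *)
definition triangular_mat :: "'a::field mat \<Rightarrow> bool" where
  "triangular_mat B \<longleftrightarrow> upper_triangular B \<and> invertible_mat B"

end

theory Submission
  imports Defs
begin


lemma ut_inv:
  fixes A :: "'a::field mat"
  assumes A: "A \<in> carrier_mat n n" and ut: "upper_triangular A"
    and d: "\<And>i. i < n \<Longrightarrow> A $$ (i,i) \<noteq> 0"
  shows "\<exists>B. B \<in> carrier_mat n n \<and> B * A = 1\<^sub>m n \<and> A * B = 1\<^sub>m n"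
proof -
  have "0 \<notin> set (diag_mat A)" using A d by (auto simp: diag_mat_def)
  hence "prod_list (diag_mat A) \<noteq> 0" by (induct "diag_mat A", auto)
  hence "det A \<noteq> 0" using det_upper_triangular[OF ut A] by simp
  from det_non_zero_imp_unit[OF A this, unfolded Units_def, of "()"]
  show ?thesis by (auto simp: ring_mat_def)
qed

lemma ut_mult:
  fixes A B :: "'a::field mat"
  assumes A: "A \<in> carrier_mat n n" and B: "B \<in> carrier_mat n n"
   and "upper_triangular A" "upper_triangular B"
  shows "upper_triangular (A * B)"
proof (rule upper_triangularI)
  fix i j assume ij: "j < i" "i < dim_row (A * B)"
  have "(A*B) $$ (i,j) = (\<Sum>k<n. A $$ (i,k) * B $$ (k,j))"
    using A B ij by (auto simp: scalar_prod_def lessThan_atLeast0 intro!: sum.cong)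
  also have "\<dots> = 0"
  proof (rule sum.neutral, intro ballI)
    fix k assume "k \<in> {..<n}"
    show "A $$ (i,k) * B $$ (k,j) = 0"
    proof (cases "k < i")
      case True then show ?thesis using assms(3) A ij by (auto dest: upper_triangularD)
    next
      case False then have "j < k" using ij by auto
      then show ?thesis using assms(4) B \<open>k \<in> {..<n}\<close> by (auto dest: upper_triangularD)
    qed
  qed
  finally show "(A*B) $$ (i,j) = 0" .
qed



definition id_out :: "nat \<Rightarrow> nat set \<Rightarrow> 'a::field mat \<Rightarrow> bool" where
 "id_out n S B \<longleftrightarrow> B \<in> carrier_mat n n \<and>
    (\<forall>i<n. \<forall>j<n. (i \<notin> S \<or> j \<notin> S) \<longrightarrow> B $$ (i,j) = (if i = j then 1 else 0))"

definition supp_in :: "nat \<Rightarrow> nat set \<Rightarrow> 'a::field mat \<Rightarrow> bool" where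
 "supp_in n S D \<longleftrightarrow> D \<in> carrier_mat n n \<and> (\<forall>i<n. \<forall>j<n. D $$ (i,j) \<noteq> 0 \<longrightarrow> i \<in> S \<and> j \<in> S)"

lemma mult_idx:
  fixes A B :: "'a::field mat"
  assumes "A \<in> carrier_mat n n" "B \<in> carrier_mat n n" "i < n" "j < n"
  shows "(A*B) $$ (i,j) = (\<Sum>k<n. A $$ (i,k) * B $$ (k,j))"
  using assms by (auto simp: scalar_prod_def lessThan_atLeast0 intro!: sum.cong)

lemma id_out_row:
  assumes "id_out n S A" "i < n" "i \<notin> S"
  shows "(\<Sum>k<n. A $$ (i,k) * f k) = f i"
proof -
  have "(\<Sum>k<n. A $$ (i,k) * f k) = (\<Sum>k<n. if k = i then f k else 0)"
    using assms by (intro sum.cong) (auto simp: id_out_def)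
  also have "\<dots> = f i" using assms by simp
  finally show ?thesis .
qed

lemma id_out_col:
  assumes "id_out n S A" "j < n" "j \<notin> S"
  shows "(\<Sum>k<n. f k * A $$ (k,j)) = f j"
proof -
  have "(\<Sum>k<n. f k * A $$ (k,j)) = (\<Sum>k<n. if k = j then f k else 0)"
    using assms by (intro sum.cong) (auto simp: id_out_def)
  also have "\<dots> = f j" using assms by simp
  finally show ?thesis .
qed

lemma id_out_mult:
  assumes A: "id_out n S A" and B: "id_out n S B"
  shows "id_out n S (A * B)"
proof -
  have cA: "A \<in> carrier_mat n n" and cB: "B \<in> carrier_mat n n" using A B by (auto simp: id_out_def)
  show ?thesis unfolding id_out_def
  proof (intro conjI allI impI)
    show "A * B \<in> carrier_mat n n" using cA cB by auto
    fix i j assume ij: "i < n" "j < n" "i \<notin> S \<or> j \<notin> S"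
    show "(A*B) $$ (i,j) = (if i = j then 1 else 0)"
    proof (cases "i \<notin> S")
      case True
      then show ?thesis using mult_idx[OF cA cB ij(1,2)] id_out_row[OF A ij(1) True, of "\<lambda>k. B $$ (k,j)"]
        B ij by (auto simp: id_out_def)
    next
      case False
      then have "j \<notin> S" using ij by auto
      then show ?thesis using mult_idx[OF cA cB ij(1,2)] id_out_col[OF B ij(2) \<open>j \<notin> S\<close>, of "\<lambda>k. A $$ (i,k)"]
        A ij by (auto simp: id_out_def)
    qed
  qed
qed

lemma id_out_inv:
  assumes A: "id_out n S A" and B: "B \<in> carrier_mat n n" and AB: "A * B = 1\<^sub>m n" and BA: "B * A = 1\<^sub>m n"
  shows "id_out n S B"
  unfolding id_out_def
proof (intro conjI allI impI)
  have cA: "A \<in> carrier_mat n n" using A by (auto simp: id_out_def)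
  show "B \<in> carrier_mat n n" by fact
  fix i j assume ij: "i < n" "j < n" "i \<notin> S \<or> j \<notin> S"
  show "B $$ (i,j) = (if i = j then 1 else 0)"
  proof (cases "i \<notin> S")
    case True
    have "(A*B) $$ (i,j) = B $$ (i,j)"
      using mult_idx[OF cA B ij(1,2)] id_out_row[OF A ij(1) True, of "\<lambda>k. B $$ (k,j)"] by simp
    then show ?thesis using AB ij by simp
  next
    case False
    then have "j \<notin> S" using ij by auto
    have "(B*A) $$ (i,j) = B $$ (i,j)"
      using mult_idx[OF B cA ij(1,2)] id_out_col[OF A ij(2) \<open>j \<notin> S\<close>, of "\<lambda>k. B $$ (i,k)"] by simp
    then show ?thesis using BA ij by simp
  qed
qed

lemma id_out_mono: "id_out n I A \<Longrightarrow> I \<subseteq> S \<Longrightarrow> id_out n S A"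
  unfolding id_out_def by blast

lemma supp_conj:
  assumes A: "id_out n S A" and B: "id_out n S B" and D: "supp_in n S D"
  shows "supp_in n S (A * D * B)"
proof -
  have cA: "A \<in> carrier_mat n n" and cB: "B \<in> carrier_mat n n" and cD: "D \<in> carrier_mat n n"
    using A B D by (auto simp: id_out_def supp_in_def)
  have "\<forall>i<n. \<forall>j<n. (A * D * B) $$ (i,j) \<noteq> 0 \<longrightarrow> i \<in> S \<and> j \<in> S"
  proof (intro allI impI)
    fix i j assume ij: "i < n" "j < n" and nz: "(A * D * B) $$ (i,j) \<noteq> 0"
    have e: "(A * D * B) $$ (i,j) = (\<Sum>k<n. (A*D) $$ (i,k) * B $$ (k,j))"
      using mult_idx[of "A*D" n B i j] cA cB cD ij by auto
    have e2: "\<And>k. k < n \<Longrightarrow> (A*D) $$ (i,k) = (\<Sum>l<n. A $$ (i,l) * D $$ (l,k))"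
      using mult_idx[OF cA cD] ij by auto
    show "i \<in> S \<and> j \<in> S"
    proof (rule ccontr)
      assume "\<not> (i \<in> S \<and> j \<in> S)"
      then consider "i \<notin> S" | "j \<notin> S" by blast
      then show False
      proof cases
        case 1
        have "\<And>k. k < n \<Longrightarrow> (A*D) $$ (i,k) = D $$ (i,k)"
          using e2 id_out_row[OF A ij(1) 1] by simp
        moreover have "\<And>k. k < n \<Longrightarrow> D $$ (i,k) = 0" using D ij 1 by (auto simp: supp_in_def)
        ultimately have "(A * D * B) $$ (i,j) = 0" unfolding e by (auto intro!: sum.neutral)
        then show False using nz by simp
      next
        case 2
        have "(A * D * B) $$ (i,j) = (A*D) $$ (i,j)" unfolding e using id_out_col[OF B ij(2) 2] by simp
        also have "\<dots> = (\<Sum>l<n. A $$ (i,l) * D $$ (l,j))" using e2 ij by simp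
        also have "\<dots> = 0" using D ij 2 by (auto simp: supp_in_def intro!: sum.neutral)
        finally show False using nz by simp
      qed
    qed
  qed
  then show ?thesis using cA cB cD unfolding supp_in_def by auto
qed



definition pmat :: "nat \<Rightarrow> (nat \<times> nat) list \<Rightarrow> 'a::field mat" where
 "pmat n ps = mat n n (\<lambda>(i,j). if (i,j) \<in> set ps then 1 else 0)"

definition good_ps :: "nat set \<Rightarrow> (nat \<times> nat) list \<Rightarrow> bool" where
 "good_ps S ps \<longleftrightarrow> distinct (map fst ps @ map snd ps) \<and> set (map fst ps @ map snd ps) \<subseteq> S"

lemma main:
  fixes D :: "'a::field mat"
  assumes "finite S" "S \<subseteq> {..<n}" "supp_in n S D" "D * D = 0\<^sub>m n n"
  shows "\<exists>B Binv ps. id_out n S B \<and> id_out n S Binv \<and> upper_triangular B \<and>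
     B * Binv = 1\<^sub>m n \<and> Binv * B = 1\<^sub>m n \<and> good_ps S ps \<and> D = B * pmat n ps * Binv"
  using assms
proof (induction "card S" arbitrary: S D rule: less_induct)
  case less
  have cD: "D \<in> carrier_mat n n" using less by (simp add: supp_in_def)
  have mc[simp]: "X * Y \<in> carrier_mat n n" if "X \<in> carrier_mat n n" "Y \<in> carrier_mat n n" for X Y :: "'a mat"
    using that by auto
  have asc: "X * Y * Z = X * (Y * Z)" if "X \<in> carrier_mat n n" "Y \<in> carrier_mat n n" "Z \<in> carrier_mat n n" for X Y Z :: "'a mat"
    using that by auto
  show ?case
  proof (cases "D = 0\<^sub>m n n")
    case True
    have "pmat n [] = (0\<^sub>m n n :: 'a mat)" by (auto simp: pmat_def)
    then show ?thesis
      apply (intro exI[of _ "1\<^sub>m n"] exI[of _ "[]"])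
      using True by (auto simp: id_out_def good_ps_def)
  next
    case False
    then obtain i0 j0 where ij0: "i0 < n" "j0 < n" "D $$ (i0,j0) \<noteq> 0"
      using cD by (metis eq_matI carrier_matD index_zero_mat(1,2,3))
    define P where "P j \<longleftrightarrow> j < n \<and> (\<exists>i<n. D $$ (i,j) \<noteq> 0)" for j
    define c where "c = (LEAST j. P j)"
    have Pc: "P c" unfolding c_def by (rule LeastI[of P j0], use ij0 in \<open>auto simp: P_def\<close>)
    have colz: "D $$ (i,j) = 0" if "j < c" "i < n" for i j
    proof -
      have "\<not> P j" using not_less_Least[of j P] that unfolding c_def by auto
      then show ?thesis using that Pc by (auto simp: P_def)
    qed
    have cn: "c < n" using Pc by (auto simp: P_def)
    define Rs where "Rs = {i. i < n \<and> D $$ (i,c) \<noteq> 0}"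
    have fRs: "finite Rs" "Rs \<noteq> {}" using Pc by (auto simp: Rs_def P_def)
    define r where "r = Max Rs"
    have rRs: "r \<in> Rs" using fRs unfolding r_def by (rule Max_in)
    have rn: "r < n" and wr0: "D $$ (r,c) \<noteq> 0" using rRs by (auto simp: Rs_def)
    have rmax: "D $$ (i,c) = 0" if "r < i" "i < n" for i
    proof -
      have "i \<in> Rs \<Longrightarrow> i \<le> r" using Max_ge[OF fRs(1)] r_def by auto
      then show ?thesis using that by (auto simp: Rs_def)
    qed
    have cS: "c \<in> S" and rS: "r \<in> S" using less(4) rn cn wr0 by (auto simp: supp_in_def)
    have rc: "r \<noteq> c"
    proof
      assume rc: "r = c"
      have "(D*D) $$ (c,c) = (\<Sum>k<n. D $$ (c,k) * D $$ (k,c))" using mult_idx[OF cD cD cn cn] .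
      also have "\<dots> = (\<Sum>k<n. if k = c then D $$ (c,c) * D $$ (c,c) else 0)"
      proof (intro sum.cong refl)
        fix k assume k: "k \<in> {..<n}"
        show "D $$ (c,k) * D $$ (k,c) = (if k = c then D $$ (c,c) * D $$ (c,c) else 0)"
          using colz[of k c] rmax[of k] k cn rc by (cases k c rule: linorder_cases) auto
      qed
      also have "\<dots> = D $$ (c,c) * D $$ (c,c)" using cn by simp
      finally show False using less(5) cn wr0 rc by simp
    qed
    define wr where "wr = D $$ (r,c)"
    define B where "B = mat n n (\<lambda>(i,j). if j = r then D $$ (i,c) else if j = c then (if i = c then 1 else 0)
       else (if i = j then 1 else 0) - (if i = c then D $$ (r,j) / wr else 0))"
    have cB: "B \<in> carrier_mat n n" by (simp add: B_def)
    have utB: "upper_triangular B"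
    proof (rule upper_triangularI)
      fix i j assume ij: "j < i" "i < dim_row B"
      then show "B $$ (i,j) = 0" using rmax[of i] colz[of j r] rn cn
        by (auto simp: B_def)
    qed
    have dB: "B $$ (i,i) \<noteq> 0" if "i < n" for i using that wr0 by (auto simp: B_def wr_def)
    obtain Bi where cBi: "Bi \<in> carrier_mat n n" and BiB: "Bi * B = 1\<^sub>m n" and BBi: "B * Bi = 1\<^sub>m n"
      using ut_inv[OF cB utB dB] by blast
    have sD: "D $$ (i,j) = 0" if "i < n" "j < n" "i \<notin> S \<or> j \<notin> S" for i j
      using less(4) that unfolding supp_in_def by blast
    have idB: "id_out n S B" unfolding id_out_def
      using cB rS cS sD rn cn by (auto simp: B_def)
    have idBi: "id_out n S Bi" by (rule id_out_inv[OF idB cBi BBi BiB])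
    define E where "E = Bi * D * B"
    define F where "F = D * B"
    have cE: "E \<in> carrier_mat n n" using cBi cD cB by (simp add: E_def)
    have cF: "F \<in> carrier_mat n n" using cD cB by (simp add: F_def)
    have suppE: "supp_in n S E" unfolding E_def by (rule supp_conj[OF idBi idB less(4)])
    have cancel1: "Bi * (B * X) = X" if "X \<in> carrier_mat n n" for X
      using that cB cBi BiB by (simp add: asc[symmetric])
    have cancel2: "B * (Bi * X) = X" if "X \<in> carrier_mat n n" for X
      using that cB cBi BBi by (simp add: asc[symmetric])
    have DDB: "D * (D * B) = 0\<^sub>m n n" using less(5) cD cB by (simp add: asc[symmetric])
    have EE: "E * E = 0\<^sub>m n n"
    proof -
      have "E * E = Bi * (D * (B * (Bi * (D * B))))" using cBi cD cB by (simp add: E_def asc)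
      also have "\<dots> = Bi * (D * (D * B))" using cancel2 cD cB by simp
      also have "\<dots> = 0\<^sub>m n n" using DDB cBi by simp
      finally show ?thesis .
    qed
    have EF: "E = Bi * F" using cBi cD cB by (simp add: E_def F_def asc)
    have BE: "B * E = F" using EF cancel2 cF by simp
    have Eidx: "E $$ (i,j) = (\<Sum>k<n. Bi $$ (i,k) * F $$ (k,j))" if "i<n" "j<n" for i j
      using mult_idx[OF cBi cF that] EF by simp
    have Fidx: "F $$ (i,j) = (\<Sum>k<n. D $$ (i,k) * B $$ (k,j))" if "i<n" "j<n" for i j
      using mult_idx[OF cD cB that] F_def by simp
    have Fc: "F $$ (k,c) = B $$ (k,r)" if "k<n" for k
    proof -
      have "F $$ (k,c) = (\<Sum>l<n. if l = c then D $$ (k,l) else 0)"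
        unfolding Fidx[OF that cn] using rc cn by (intro sum.cong refl) (auto simp: B_def)
      also have "\<dots> = D $$ (k,c)" using cn by simp
      finally show ?thesis using that rn by (simp add: B_def)
    qed
    have Fr: "F $$ (k,r) = 0" if "k<n" for k
    proof -
      have "F $$ (k,r) = (\<Sum>l<n. D $$ (k,l) * D $$ (l,c))"
        unfolding Fidx[OF that rn] using rn by (intro sum.cong refl) (auto simp: B_def)
      also have "\<dots> = (D * D) $$ (k,c)" using mult_idx[OF cD cD that cn] by simp
      finally show ?thesis using less(5) that cn by simp
    qed
    have Ec: "E $$ (i,c) = (if i = r then 1 else 0)" if "i<n" for i
    proof -
      have "E $$ (i,c) = (\<Sum>k<n. Bi $$ (i,k) * B $$ (k,r))" using Eidx[OF that cn] Fc by simp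
      also have "\<dots> = (Bi * B) $$ (i,r)" using mult_idx[OF cBi cB that rn] by simp
      finally show ?thesis using BiB that rn by simp
    qed
    have Er: "E $$ (i,r) = 0" if "i<n" for i
      using Eidx[OF that rn] Fr by simp
    have BEr: "(B * E) $$ (r,j) = wr * E $$ (r,j)" if "j<n" for j
    proof -
      have "(B * E) $$ (r,j) = (\<Sum>k<n. if k = r then wr * E $$ (r,j) else 0)"
        unfolding mult_idx[OF cB cE rn that] using rn rc by (intro sum.cong refl) (auto simp: B_def wr_def)
      then show ?thesis using rn by simp
    qed
    have Frj: "F $$ (r,j) = 0" if "j<n" "j \<noteq> r" "j \<noteq> c" for j
    proof -
      have "F $$ (r,j) = (\<Sum>k<n. (if k = j then D $$ (r,j) else 0) - (if k = c then wr * (D $$ (r,j) / wr) else 0))"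
        unfolding Fidx[OF rn that(1)] using that by (intro sum.cong refl) (auto simp: B_def wr_def)
      also have "\<dots> = D $$ (r,j) - wr * (D $$ (r,j) / wr)"
        using that cn by (simp add: sum_subtractf)
      also have "\<dots> = 0" using wr0 by (simp add: wr_def)
      finally show ?thesis .
    qed
    have Erow: "E $$ (r,j) = (if j = c then 1 else 0)" if "j<n" for j
    proof -
      consider "j = c" | "j = r" | "j \<noteq> c" "j \<noteq> r" by blast
      then show ?thesis
      proof cases
        case 3
        have "wr * E $$ (r,j) = 0" using BEr[OF that] BE Frj[OF that 3(2,1)] by simp
        then show ?thesis using wr0 3 by (simp add: wr_def)
      qed (use Ec Er rn rc in auto)
    qed
    have Ecrow: "E $$ (c,j) = 0" if "j<n" for j
    proof -
      have "(E * E) $$ (r,j) = (\<Sum>k<n. if k = c then E $$ (c,j) else 0)"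
        unfolding mult_idx[OF cE cE rn that] using Erow by (intro sum.cong refl) auto
      then show ?thesis using EE rn that cn by simp
    qed
    define R :: "'a mat" where "R = pmat n [(r,c)]"
    define M where "M = mat n n (\<lambda>(i,j). if i = r \<or> i = c \<or> j = r \<or> j = c then 0 else E $$ (i,j))"
    have cR: "R \<in> carrier_mat n n" by (simp add: R_def pmat_def)
    have cM: "M \<in> carrier_mat n n" by (simp add: M_def)
    have EMR: "E = M + R"
      by (rule eq_matI) (use cE Ec Er Erow Ecrow rc in \<open>auto simp: M_def R_def pmat_def\<close>)
    define I where "I = S - {r,c}"
    have IS: "I \<subseteq> S" by (auto simp: I_def)
    have cardI: "card I < card S" using less(2) rS unfolding I_def by (intro psubset_card_mono) auto
    have suppM: "supp_in n I M" using suppE by (auto simp: supp_in_def M_def I_def)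
    have MM: "M * M = 0\<^sub>m n n"
    proof (rule eq_matI)
      fix i j assume ij: "i < dim_row (0\<^sub>m n n :: 'a mat)" "j < dim_col (0\<^sub>m n n :: 'a mat)"
      then have ij: "i < n" "j < n" by auto
      have "(M * M) $$ (i,j) = (\<Sum>k<n. if i = r \<or> i = c \<or> j = r \<or> j = c then 0 else E $$ (i,k) * E $$ (k,j))"
        unfolding mult_idx[OF cM cM ij] using ij Er Ecrow by (intro sum.cong refl) (auto simp: M_def)
      also have "\<dots> = 0"
      proof (cases "i = r \<or> i = c \<or> j = r \<or> j = c")
        case False
        then show ?thesis using mult_idx[OF cE cE ij] EE ij by simp
      qed simp
      finally show "(M * M) $$ (i,j) = 0\<^sub>m n n $$ (i,j)" using ij by simp
    qed (use cM in auto)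
    obtain B3 B3i ps3 where idB3: "id_out n I B3" and idB3i: "id_out n I B3i"
      and utB3: "upper_triangular B3" and B3B3i: "B3 * B3i = 1\<^sub>m n" and B3iB3: "B3i * B3 = 1\<^sub>m n"
      and gps3: "good_ps I ps3" and M3: "M = B3 * pmat n ps3 * B3i"
      using less(1)[OF cardI _ _ suppM MM] less(2,3) IS by (meson finite_subset order_trans)
    have cB3: "B3 \<in> carrier_mat n n" and cB3i: "B3i \<in> carrier_mat n n"
      using idB3 idB3i by (auto simp: id_out_def)
    have rI: "r \<notin> I" and cI: "c \<notin> I" by (auto simp: I_def)
    have B3R: "B3 * R = R"
    proof (rule eq_matI)
      fix i j assume "i < dim_row R" "j < dim_col R"
      then have ij: "i < n" "j < n" using cR by auto
      have "(B3 * R) $$ (i,j) = (\<Sum>k<n. if k = r then B3 $$ (i,r) * (if j = c then 1 else 0) else 0)"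
        unfolding mult_idx[OF cB3 cR ij] using ij by (intro sum.cong refl) (auto simp: R_def pmat_def)
      also have "\<dots> = R $$ (i,j)" using rn ij idB3 rI by (auto simp: R_def pmat_def id_out_def)
      finally show "(B3 * R) $$ (i,j) = R $$ (i,j)" .
    qed (use cB3 cR in auto)
    have RB3i: "R * B3i = R"
    proof (rule eq_matI)
      fix i j assume "i < dim_row R" "j < dim_col R"
      then have ij: "i < n" "j < n" using cR by auto
      have "(R * B3i) $$ (i,j) = (\<Sum>k<n. if k = c then (if i = r then 1 else 0) * B3i $$ (c,j) else 0)"
        unfolding mult_idx[OF cR cB3i ij] using ij by (intro sum.cong refl) (auto simp: R_def pmat_def)
      also have "\<dots> = R $$ (i,j)" using cn ij idB3i cI by (auto simp: R_def pmat_def id_out_def)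
      finally show "(R * B3i) $$ (i,j) = R $$ (i,j)" .
    qed (use cB3i cR in auto)
    define N3 :: "'a mat" where "N3 = pmat n ps3"
    have cN3: "N3 \<in> carrier_mat n n" by (simp add: N3_def pmat_def)
    have rcps3: "(r,c) \<notin> set ps3" using gps3 rI unfolding good_ps_def by force
    have pm: "pmat n ((r,c) # ps3) = N3 + R"
      by (rule eq_matI) (use rcps3 in \<open>auto simp: N3_def R_def pmat_def\<close>)
    have E3: "E = B3 * (N3 + R) * B3i"
    proof -
      have "B3 * (N3 + R) * B3i = (B3 * N3 + B3 * R) * B3i"
        using cB3 cN3 cR by (simp add: mult_add_distrib_mat)
      also have "\<dots> = B3 * N3 * B3i + R * B3i"
        using cB3 cN3 cR cB3i B3R add_mult_distrib_mat[of "B3 * N3" n n R B3i n] by simp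
      also have "\<dots> = M + R" using M3 RB3i N3_def by simp
      finally show ?thesis using EMR by simp
    qed
    have DE: "D = B * E * Bi"
    proof -
      have "B * E * Bi = B * (Bi * (D * (B * Bi)))" using cB cBi cD by (simp add: E_def asc)
      also have "\<dots> = D" using cancel2 cD BBi by simp
      finally show ?thesis by simp
    qed
    show ?thesis
    proof (intro exI conjI)
      show "id_out n S (B * B3)" by (rule id_out_mult[OF idB id_out_mono[OF idB3 IS]])
      show "id_out n S (B3i * Bi)" by (rule id_out_mult[OF id_out_mono[OF idB3i IS] idBi])
      show "upper_triangular (B * B3)" by (rule ut_mult[OF cB cB3 utB utB3])
      show "B * B3 * (B3i * Bi) = 1\<^sub>m n"
        using cB cB3 cB3i cBi B3B3i BBi by (simp add: asc[symmetric]; simp add: asc)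
      show "B3i * Bi * (B * B3) = 1\<^sub>m n"
        using cB cB3 cB3i cBi B3iB3 BiB by (simp add: asc[symmetric]; simp add: asc)
      show "good_ps S ((r,c) # ps3)" using gps3 rc rI cI rS cS IS unfolding good_ps_def by auto
      show "D = B * B3 * pmat n ((r,c) # ps3) * (B3i * Bi)"
        unfolding pm DE E3 using cB cB3 cB3i cBi cN3 cR by (simp add: asc)
    qed
  qed
qed



lemma jm_cons: "jordan_matrix ((b,a) # xs) = four_block_mat (jordan_block b a)
   (0\<^sub>m b (sum_list (map fst xs))) (0\<^sub>m (sum_list (map fst xs)) b) (jordan_matrix xs)"
  unfolding jordan_matrix_def by (simp add: Let_def jordan_matrix_def[symmetric])

lemma jm_ones: "jordan_matrix (replicate l (1::nat, 0::'a::field)) = 0\<^sub>m l l"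
proof (induction l)
  case 0 then show ?case by (simp add: jordan_matrix_def)
next
  case (Suc l)
  have sl: "sum_list (map fst (replicate l (1::nat, 0::'a))) = l"
    by (induct l) auto
  show ?case
    by (simp only: replicate_Suc jm_cons sl Suc.IH, rule eq_matI, auto)
qed

lemma jm_main: "jordan_matrix (replicate k (2::nat, 0::'a::field) @ replicate l (1, 0)) =
   mat (2*k+l) (2*k+l) (\<lambda>(a,b). if b = Suc a \<and> even a \<and> a < 2*k then 1 else 0)"
proof (induction k)
  case 0 then show ?case by (simp only: replicate_0 append_Nil jm_ones mult_0_right add_0, rule eq_matI, simp_all)
next
  case (Suc k)
  have sl: "sum_list (map fst (replicate k (2::nat, 0::'a) @ replicate l (1, 0))) = 2*k+l"
    by (induct k) (auto, induct l, auto)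
  have e: "replicate (Suc k) (2::nat, 0::'a) @ replicate l (1, 0) = (2,0) # (replicate k (2::nat, 0::'a) @ replicate l (1, 0))"
    by simp
  show ?case
  proof (simp only: e jm_cons sl Suc.IH, rule eq_matI)
    fix i j assume ij: "i < dim_row (mat (2 * Suc k + l) (2 * Suc k + l) (\<lambda>(a,b). if b = Suc a \<and> even a \<and> a < 2 * Suc k then 1 else (0::'a)))"
       "j < dim_col (mat (2 * Suc k + l) (2 * Suc k + l) (\<lambda>(a,b). if b = Suc a \<and> even a \<and> a < 2 * Suc k then 1 else (0::'a)))"
    then have ij: "i < Suc (Suc (2*k+l))" "j < Suc (Suc (2*k+l))" by auto
    show "four_block_mat (jordan_block 2 0) (0\<^sub>m 2 (2 * k + l)) (0\<^sub>m (2 * k + l) 2)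
          (mat (2 * k + l) (2 * k + l) (\<lambda>(a, b). if b = Suc a \<and> even a \<and> a < 2 * k then 1 else 0)) $$ (i, j) =
         mat (2 * Suc k + l) (2 * Suc k + l) (\<lambda>(a, b). if b = Suc a \<and> even a \<and> a < 2 * Suc k then 1 else (0::'a)) $$ (i, j)"
    proof -
      have d: "i < dim_row (jordan_block 2 (0::'a)) + dim_row (mat (2 * k + l) (2 * k + l) (\<lambda>(a, b). if b = Suc a \<and> even a \<and> a < 2 * k then 1 else (0::'a)))"
        "j < dim_col (jordan_block 2 (0::'a)) + dim_col (mat (2 * k + l) (2 * k + l) (\<lambda>(a, b). if b = Suc a \<and> even a \<and> a < 2 * k then 1 else (0::'a)))"
        using ij by auto
      note F = index_mat_four_block(1)[OF d(1) d(2)]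
      show ?thesis
      proof (cases "i < 2"; cases "j < 2")
        assume "i < 2" "j < 2" then show ?thesis using ij F by (auto simp: less_2_cases_iff)
      next
        assume "i < 2" "\<not> j < 2" then show ?thesis using ij F by auto
      next
        assume "\<not> i < 2" "j < 2" then show ?thesis using ij F by auto
      next
        assume a: "\<not> i < 2" "\<not> j < 2"
        have "(j - 2 = Suc (i - 2) \<and> even (i - 2) \<and> i - 2 < 2 * k) \<longleftrightarrow> (j = Suc i \<and> even i \<and> i < 2 * Suc k)"
          using a by auto
        then show ?thesis using a ij F by simp
      qed
    qed
  qed auto
qed



definition pairs_list :: "(nat \<times> nat) list \<Rightarrow> nat list" where
 "pairs_list ps = concat (map (\<lambda>(a,b). [a,b]) ps)"

lemma pl_set: "set (pairs_list ps) = set (map fst ps @ map snd ps)"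
  by (induct ps) (auto simp: pairs_list_def)

lemma pl_len: "length (pairs_list ps) = 2 * length ps"
  by (induct ps) (auto simp: pairs_list_def)

lemma pl_distinct: "distinct (map fst ps @ map snd ps) \<Longrightarrow> distinct (pairs_list ps)"
proof (induct ps)
  case Nil then show ?case by (simp add: pairs_list_def)
next
  case (Cons x ps)
  obtain a b where x: "x = (a,b)" by force
  have "pairs_list (x # ps) = a # b # pairs_list ps" by (simp add: pairs_list_def x)
  then show ?case using Cons pl_set[of ps] by (auto simp: x)
qed

lemma pl_nth: "t < length ps \<Longrightarrow> pairs_list ps ! (2*t) = fst (ps!t) \<and> pairs_list ps ! (Suc (2*t)) = snd (ps!t)"
proof (induct ps arbitrary: t)
  case Nil then show ?case by simp
next
  case (Cons x ps)
  obtain a b where x: "x = (a,b)" by force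
  have e: "pairs_list (x # ps) = a # b # pairs_list ps" by (simp add: pairs_list_def x)
  show ?case
  proof (cases t)
    case 0 then show ?thesis by (simp add: x pairs_list_def)
  next
    case (Suc t')
    then have "2 * t = Suc (Suc (2 * t'))" by simp
    then show ?thesis using Cons Suc by (simp add: e)
  qed
qed

lemma pmat_almost_jordan:
  assumes g: "good_ps {..<m} ps"
  shows "almost_jordan_mat (pmat m ps :: 'a::field mat)"
proof -
  define k where "k = length ps"
  define T where "T = set (map fst ps @ map snd ps)"
  define F where "F = filter (\<lambda>i. i \<notin> T) [0..<m]"
  define L where "L = pairs_list ps @ F"
  have dT: "distinct (map fst ps @ map snd ps)" and Tm: "T \<subseteq> {..<m}" using g by (auto simp: good_ps_def T_def)
  have dL: "distinct L" using pl_distinct[OF dT] pl_set[of ps] unfolding L_def F_def T_def by auto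
  have sL: "set L = {..<m}" using pl_set[of ps] Tm unfolding L_def F_def T_def by auto
  have lL: "length L = m" using distinct_card[OF dL] sL by simp
  have lpl: "length (pairs_list ps) = 2 * k" using pl_len k_def by simp
  have km: "2 * k \<le> m" using lL lpl unfolding L_def by simp
  define p where "p j = (if j < m then L ! j else j)" for j
  have bL: "bij_betw ((!) L) {..<m} {..<m}" using bij_betw_nth[OF dL] sL lL by simp
  have bp: "bij_betw p {..<m} {..<m}" using bL by (rule bij_betw_cong[THEN iffD1, rotated]) (simp add: p_def)
  have pp: "p permutes {..<m}" by (rule bij_imp_permutes[OF bp]) (simp add: p_def)
  have pm: "p j < m" if "j < m" for j using bp that by (auto simp: bij_betw_def)
  have pinj: "p a = p b \<longleftrightarrow> a = b" if "a < m" "b < m" for a b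
    using bp that by (auto simp: bij_betw_def inj_on_def)
  define N :: "'a mat" where "N = pmat m ps"
  have cN: "N \<in> carrier_mat m m" by (simp add: N_def pmat_def)
  have NN: "N * N = 0\<^sub>m m m"
  proof (rule eq_matI)
    fix i j assume "i < dim_row (0\<^sub>m m m :: 'a mat)" "j < dim_col (0\<^sub>m m m :: 'a mat)"
    then have ij: "i < m" "j < m" by auto
    have "(N * N) $$ (i,j) = (\<Sum>k<m. N $$ (i,k) * N $$ (k,j))" by (rule mult_idx[OF cN cN ij])
    also have "\<dots> = 0"
    proof (rule sum.neutral, intro ballI)
      fix l assume l: "l \<in> {..<m}"
      have "\<not> ((i,l) \<in> set ps \<and> (l,j) \<in> set ps)"
      proof
        assume "(i,l) \<in> set ps \<and> (l,j) \<in> set ps"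
        then have "l \<in> set (map snd ps)" "l \<in> set (map fst ps)" by force+
        then show False using dT by auto
      qed
      then show "N $$ (i,l) * N $$ (l,j) = 0" using ij l by (auto simp: N_def pmat_def)
    qed
    finally show "(N * N) $$ (i,j) = 0\<^sub>m m m $$ (i,j)" using ij by simp
  qed (use cN in auto)
  define P :: "'a mat" where "P = mat m m (\<lambda>(i,j). if i = p j then 1 else 0)"
  define Pi :: "'a mat" where "Pi = mat m m (\<lambda>(i,j). if j = p i then 1 else 0)"
  have cP: "P \<in> carrier_mat m m" and cPi: "Pi \<in> carrier_mat m m" by (auto simp: P_def Pi_def)
  have PPi: "P * Pi = 1\<^sub>m m"
  proof (rule eq_matI)
    fix i j assume "i < dim_row (1\<^sub>m m :: 'a mat)" "j < dim_col (1\<^sub>m m :: 'a mat)"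
    then have ij: "i < m" "j < m" by auto
    have "(P * Pi) $$ (i,j) = (\<Sum>k<m. (\<lambda>x. if i = x \<and> j = x then 1 else 0) (p k))"
      unfolding mult_idx[OF cP cPi ij] using ij by (intro sum.cong refl) (auto simp: P_def Pi_def)
    also have "\<dots> = (\<Sum>x<m. if i = x \<and> j = x then (1::'a) else 0)"
      by (rule sum.reindex_bij_betw[OF bp])
    also have "\<dots> = (\<Sum>x<m. if x = i then (if j = i then 1 else 0) else 0)"
      by (intro sum.cong refl) auto
    also have "\<dots> = 1\<^sub>m m $$ (i,j)" using ij by simp
    finally show "(P * Pi) $$ (i,j) = 1\<^sub>m m $$ (i,j)" .
  qed (use cP cPi in auto)
  have PiP: "Pi * P = 1\<^sub>m m"
  proof (rule eq_matI)
    fix i j assume "i < dim_row (1\<^sub>m m :: 'a mat)" "j < dim_col (1\<^sub>m m :: 'a mat)"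
    then have ij: "i < m" "j < m" by auto
    have "(Pi * P) $$ (i,j) = (\<Sum>x<m. if x = p i then (if p i = p j then 1 else 0) else (0::'a))"
      unfolding mult_idx[OF cPi cP ij] using ij by (intro sum.cong refl) (auto simp: P_def Pi_def)
    also have "\<dots> = 1\<^sub>m m $$ (i,j)" using ij pm pinj by simp
    finally show "(Pi * P) $$ (i,j) = 1\<^sub>m m $$ (i,j)" .
  qed (use cP cPi in auto)
  have key: "(L ! a, L ! b) \<in> set ps \<longleftrightarrow> (b = Suc a \<and> even a \<and> a < 2 * k)" if ab: "a < m" "b < m" for a b
  proof
    assume "(L ! a, L ! b) \<in> set ps"
    then obtain t where t: "t < k" "ps ! t = (L ! a, L ! b)" unfolding k_def by (metis in_set_conv_nth)
    have tt: "2 * t < 2 * k" "Suc (2 * t) < 2 * k" using t by auto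
    have "L ! (2*t) = L ! a" "L ! (Suc (2*t)) = L ! b"
      using pl_nth[of t ps] t tt lpl unfolding L_def k_def by (auto simp: nth_append)
    then have "2 * t = a" "Suc (2 * t) = b" using dL ab tt km lL by (simp_all add: nth_eq_iff_index_eq)
    then show "b = Suc a \<and> even a \<and> a < 2 * k" using tt by auto
  next
    assume "b = Suc a \<and> even a \<and> a < 2 * k"
    then obtain t where t: "a = 2 * t" "b = Suc (2 * t)" "t < k" by (auto elim!: evenE)
    have "L ! a = fst (ps ! t)" "L ! b = snd (ps ! t)"
      using pl_nth[of t ps] t lpl unfolding L_def k_def by (auto simp: nth_append)
    then show "(L ! a, L ! b) \<in> set ps" using t unfolding k_def by (metis nth_mem prod.collapse)
  qed
  have conj: "Pi * N * P = jordan_matrix (replicate k (2::nat, 0::'a) @ replicate (m - 2*k) (1, 0))"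
  proof -
    have e1: "(Pi * N) $$ (a,l) = N $$ (p a, l)" if "a < m" "l < m" for a l
    proof -
      have "(Pi * N) $$ (a,l) = (\<Sum>x<m. if x = p a then N $$ (p a, l) else 0)"
        unfolding mult_idx[OF cPi cN that] using that by (intro sum.cong refl) (auto simp: Pi_def)
      then show ?thesis using pm that by simp
    qed
    have "Pi * N * P = mat m m (\<lambda>(a,b). if b = Suc a \<and> even a \<and> a < 2*k then 1 else 0)"
    proof (rule eq_matI)
      fix a b assume "a < dim_row (mat m m (\<lambda>(a,b). if b = Suc a \<and> even a \<and> a < 2*k then 1 else (0::'a)))"
        "b < dim_col (mat m m (\<lambda>(a,b). if b = Suc a \<and> even a \<and> a < 2*k then 1 else (0::'a)))"
      then have ab: "a < m" "b < m" by auto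
      have cPN: "Pi * N \<in> carrier_mat m m" using cPi cN by auto
      have "(Pi * N * P) $$ (a,b) = (\<Sum>x<m. if x = p b then N $$ (p a, p b) else 0)"
        unfolding mult_idx[OF cPN cP ab] using ab e1 by (intro sum.cong refl) (auto simp: P_def)
      also have "\<dots> = N $$ (p a, p b)" using pm ab by simp
      also have "\<dots> = (if b = Suc a \<and> even a \<and> a < 2*k then 1 else 0)"
        using key[OF ab] pm ab by (simp add: N_def pmat_def p_def)
      finally show "(Pi * N * P) $$ (a,b) = mat m m (\<lambda>(a,b). if b = Suc a \<and> even a \<and> a < 2*k then 1 else (0::'a)) $$ (a,b)"
        using ab by simp
    qed (use cPi cN cP in auto)
    also have "\<dots> = jordan_matrix (replicate k (2::nat, 0::'a) @ replicate (m - 2*k) (1, 0))"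
      unfolding jm_main using km by simp
    finally show ?thesis .
  qed
  have jd: "jordan_differential_mat (Pi * N * P)"
    unfolding jordan_differential_mat_def
    by (rule exI[of _ "replicate k 2 @ replicate (m - 2*k) 1"]) (auto simp add: conj)
  show ?thesis
    unfolding almost_jordan_mat_def N_def[symmetric]
  proof (intro conjI exI)
    show "differential_mat N" using cN NN by (simp add: differential_mat_def square_mat.simps)
    show "permutation_mat (dim_row N) P" using cN pp unfolding permutation_mat_def P_def by auto
  qed (use cN cPi PPi PiP jd in auto)
qed



theorem theorem1p2:
  fixes D :: "'a::field mat"
  assumes "D \<in> carrier_mat m m"
    and "differential_mat D"
  shows "\<exists>Dj B Binv. Dj \<in> carrier_mat m m \<and> B \<in> carrier_mat m m \<and> Binv \<in> carrier_mat m m \<and>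
           almost_jordan_mat Dj \<and> triangular_mat B \<and>
           B * Binv = 1\<^sub>m m \<and> Binv * B = 1\<^sub>m m \<and>
           D = B * Dj * Binv"
proof -
  have DD: "D * D = 0\<^sub>m m m" using assms by (simp add: differential_mat_def)
  have s: "supp_in m {..<m} D" using assms(1) by (simp add: supp_in_def)
  obtain B Binv ps where idB: "id_out m {..<m} B" and idBi: "id_out m {..<m} Binv"
    and ut: "upper_triangular B" and BBi: "B * Binv = 1\<^sub>m m" and BiB: "Binv * B = 1\<^sub>m m"
    and g: "good_ps {..<m} ps" and De: "D = B * pmat m ps * Binv"
    using main[OF _ _ s DD] by blast
  have cB: "B \<in> carrier_mat m m" and cBi: "Binv \<in> carrier_mat m m" using idB idBi by (auto simp: id_out_def)
  have tB: "triangular_mat B" unfolding triangular_mat_def invertible_mat_def inverts_mat_def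
    using ut cB BBi BiB cBi by (auto simp: square_mat.simps)
  show ?thesis
    by (rule exI[of _ "pmat m ps"], rule exI[of _ B], rule exI[of _ Binv])
      (use cB cBi tB BBi BiB De pmat_almost_jordan[OF g] in \<open>auto simp: pmat_def\<close>)
qed


end
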